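(* Let $n\ge0$ and $k,m\ge1$ be integers, and let $r_0<r_1<\dots<r_{k-1}$ and $s_0<s_1<\dots<s_{k-1}$ be integers in $\{1,\dots,k+m\}$. Let $\bar r_0<\dots<\bar r_{m-1}$ and $\bar s_0<\dots<\bar s_{m-1}$ be the elements of $\{1,\dots,k+m\}\setminus\{r_0,\dots,r_{k-1}\}$ and $\{1,\dots,k+m\}\setminus\{s_0,\dots,s_{k-1}\}$ respectively. Then $$\det\Big(C_{2n}^{(2k+2m-1)}(2r_i-2\to2s_j-2)\Big)_{0\le i,j\le k-1}=(-1)^{\sum_{i=0}^{m-1}(\bar r_i+\bar s_i)}\det\Big(C_{-2n}^{(2k+2m-1)}(2\bar r_i-2\to2\bar s_j-2)\Big)_{0\le i,j\le m-1}.$$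
   Context: For $N\ge0$ and $0\le r,s\le K$, $C_N^{(K)}(r\to s)$ is the number of lattice paths with steps $(1,1),(1,-1)$ from $(0,r)$ to $(N,s)$ never below the $x$-axis nor above $y=K$. For odd $K$, $F(x)=\sum_{N\ge0}C_N^{(K)}(r\to s)x^N$ is a rational function $p/q$ with $\deg p<\deg q$, $q(0)\ne0$, and for negative $N$ one defines $C_N^{(K)}(r\to s)$ by $\sum_{N\ge1}C_{-N}^{(K)}(r\to s)x^N=-F(1/x)$ (equivalently by running the linear recurrence backwards). *)

theory Defs
  imports Main "Jordan_Normal_Form.Determinant"
begin

text \<open>Lattice paths with steps (1,1),(1,-1) from (0,r) to (N,s), staying in the strip
  0 <= y <= K, encoded by the list of their heights at x = 0, ..., N.\<close>
definition strip_paths :: "int \<Rightarrow> nat \<Rightarrow> int \<Rightarrow> int \<Rightarrow> int list set" where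
  "strip_paths K N r s = {xs. length xs = Suc N \<and> xs ! 0 = r \<and> xs ! N = s
      \<and> (\<forall>i<N. \<bar>xs ! Suc i - xs ! i\<bar> = 1)
      \<and> (\<forall>i\<le>N. 0 \<le> xs ! i \<and> xs ! i \<le> K)}"

definition C_nonneg :: "int \<Rightarrow> nat \<Rightarrow> int \<Rightarrow> int \<Rightarrow> int" where
  "C_nonneg K N r s = int (card (strip_paths K N r s))"

text \<open>A two-sided integer sequence satisfies a linear recurrence with constant coefficients
  a_0, ..., a_d, where a_0 and a_d are nonzero (so it can be run forwards and backwards).\<close>
definition satisfies_lin_rec :: "(int \<Rightarrow> int) \<Rightarrow> bool" where
  "satisfies_lin_rec c \<longleftrightarrow> (\<exists>(d::nat) (a::nat \<Rightarrow> int). a 0 \<noteq> 0 \<and> a d \<noteq> 0 \<and>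
      (\<forall>N::int. (\<Sum>i\<le>d. a i * c (N + int i)) = 0))"

text \<open>C_N^{(K)}(r -> s) for all integers N: for N >= 0 the path count; for N < 0 the value
  obtained by running the linear recurrence of the sequence backwards, i.e. the unique
  two-sided extension of the path-count sequence satisfying a linear recurrence.\<close>
definition C :: "int \<Rightarrow> int \<Rightarrow> int \<Rightarrow> int \<Rightarrow> int" where
  "C K N r s = (if 0 \<le> N then C_nonneg K (nat N) r s
     else (THE c. (\<forall>M\<ge>0. c M = C_nonneg K (nat M) r s) \<and> satisfies_lin_rec c) N)"

end

theory Submission
  imports Defs
begin


type_synonym fm = "nat \<Rightarrow> nat \<Rightarrow> int"

definition mm :: "nat \<Rightarrow> fm \<Rightarrow> fm \<Rightarrow> fm" where
  "mm n X Y = (\<lambda>i j. if i < n \<and> j < n then (\<Sum>t<n. X i t * Y t j) else 0)"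

definition idm :: "nat \<Rightarrow> fm" where
  "idm n = (\<lambda>i j. if i = j \<and> i < n then 1 else 0)"

definition supp :: "nat \<Rightarrow> fm \<Rightarrow> bool" where
  "supp n X \<longleftrightarrow> (\<forall>i j. X i j \<noteq> 0 \<longrightarrow> i < n \<and> j < n)"

fun mp :: "nat \<Rightarrow> fm \<Rightarrow> nat \<Rightarrow> fm" where
  "mp n X 0 = idm n"
| "mp n X (Suc k) = mm n (mp n X k) X"

lemma supp_mm[simp]: "supp n (mm n X Y)"
  unfolding supp_def mm_def by auto

lemma supp_idm[simp]: "supp n (idm n)"
  unfolding supp_def idm_def by auto

lemma supp_mp[simp]: "supp n (mp n X k)"
  by (cases k) auto

lemma suppD: "supp n X \<Longrightarrow> \<not> (i < n \<and> j < n) \<Longrightarrow> X i j = 0"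
  unfolding supp_def by blast

lemma mm_assoc: "mm n (mm n X Y) Z = mm n X (mm n Y Z)"
proof (intro ext)
  fix i j
  show "mm n (mm n X Y) Z i j = mm n X (mm n Y Z) i j"
    unfolding mm_def
    by (auto simp: sum_distrib_left sum_distrib_right mult.assoc intro: sum.swap)
qed

lemma mm_idm_left: assumes "supp n X" shows "mm n (idm n) X = X"
proof (intro ext)
  fix i j
  show "mm n (idm n) X i j = X i j"
  proof (cases "i < n \<and> j < n")
    case True
    have "(\<Sum>t<n. idm n i t * X t j) = (\<Sum>t<n. if t = i then X i j else 0)"
      by (rule sum.cong) (auto simp: idm_def)
    then show ?thesis using True by (simp add: mm_def)
  next
    case False then show ?thesis using assms by (auto simp: mm_def suppD)
  qed
qed

lemma mm_idm_right: assumes "supp n X" shows "mm n X (idm n) = X"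
proof (intro ext)
  fix i j
  show "mm n X (idm n) i j = X i j"
  proof (cases "i < n \<and> j < n")
    case True
    have "(\<Sum>t<n. X i t * idm n t j) = (\<Sum>t<n. if t = j then X i j else 0)"
      by (rule sum.cong) (auto simp: idm_def)
    then show ?thesis using True by (simp add: mm_def)
  next
    case False then show ?thesis using assms by (auto simp: mm_def suppD)
  qed
qed

lemma mp_add: "mp n X (a + b) = mm n (mp n X a) (mp n X b)"
  by (induction b) (auto simp: mm_idm_right mm_assoc)

lemma mp_Suc': "mp n X (Suc k) = mm n X (mp n X k)"
proof -
  have "mp n X (Suc k) = mp n X (1 + k)" by simp
  also have "\<dots> = mm n (mp n X 1) (mp n X k)" by (rule mp_add)
  also have "\<dots> = mm n (mm n (idm n) X) (mp n X k)" by simp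
  also have "\<dots> = mm n (idm n) (mm n X (mp n X k))" by (rule mm_assoc)
  also have "\<dots> = mm n X (mp n X k)" by (rule mm_idm_left) simp
  finally show ?thesis .
qed

lemma mp_mult: "mp n X (a * b) = mp n (mp n X a) b"
proof (induction b)
  case (Suc b)
  have "mp n X (a * Suc b) = mp n X (a * b + a)" by (simp add: add.commute)
  also have "\<dots> = mm n (mp n X (a*b)) (mp n X a)" by (rule mp_add)
  finally show ?case using Suc by simp
qed simp

lemma mm_diff_right: "mm n X (\<lambda>i j. Y i j - Z i j) = (\<lambda>i j. mm n X Y i j - mm n X Z i j)"
  by (intro ext) (auto simp: mm_def algebra_simps sum_subtractf)

lemma mm_diff_left: "mm n (\<lambda>i j. Y i j - Z i j) X = (\<lambda>i j. mm n Y X i j - mm n Z X i j)"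
  by (intro ext) (auto simp: mm_def algebra_simps sum_subtractf)

definition symm :: "fm \<Rightarrow> bool" where "symm X \<longleftrightarrow> (\<forall>i j. X i j = X j i)"

lemma mm_transp: "mm n X Y i j = mm n (\<lambda>a b. Y b a) (\<lambda>a b. X b a) j i"
  unfolding mm_def by (auto simp: mult.commute)

lemma symm_mp: assumes "symm X" shows "symm (mp n X k)"
proof (induction k)
  case 0 then show ?case by (auto simp: symm_def idm_def)
next
  case (Suc k)
  have c: "mm n (mp n X k) X = mm n X (mp n X k)"
    using mp_Suc'[of n X k] by simp
  show ?case unfolding symm_def
  proof (intro allI)
    fix i j
    have "mp n X (Suc k) i j = mm n (mp n X k) X i j" by simp
    also have "\<dots> = mm n (\<lambda>a b. X b a) (\<lambda>a b. mp n X k b a) j i" by (rule mm_transp)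
    also have "mm n (\<lambda>a b. X b a) (\<lambda>a b. mp n X k b a) = mm n X (mp n X k)"
    proof -
      have e1: "(\<lambda>a b. X b a) = X" using assms by (auto simp: symm_def)
      have e2: "(\<lambda>a b. mp n X k b a) = mp n X k" using Suc by (auto simp: symm_def intro!: ext)
      show ?thesis by (simp only: e1 e2)
    qed
    finally show "mp n X (Suc k) i j = mp n X (Suc k) j i" using c by simp
  qed
qed



lemma enum_unique:
  fixes f g :: "nat \<Rightarrow> 'a::linorder"
  assumes "strict_mono_on {0..<p} f" "strict_mono_on {0..<p} g" "f ` {0..<p} = g ` {0..<p}" "i < p"
  shows "f i = g i"
proof -
  have sf: "sorted_wrt (<) (map f [0..<p])" using assms(1)
    by (auto simp: sorted_wrt_iff_nth_less strict_mono_on_def)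
  have sg: "sorted_wrt (<) (map g [0..<p])" using assms(2)
    by (auto simp: sorted_wrt_iff_nth_less strict_mono_on_def)
  have "map f [0..<p] = map g [0..<p]"
    apply (rule sorted_distinct_set_unique)
    using sf sg assms(3) by (auto simp: strict_sorted_iff)
  then show ?thesis using assms(4)
    by (metis diff_zero length_upt nth_map nth_upt plus_nat.add_0)
qed

lemma notin_imgI: "(\<And>t. t \<in> B \<Longrightarrow> y \<noteq> f t) \<Longrightarrow> y \<notin> f ` B" by auto

lemma img_mem: "f ` A = B \<Longrightarrow> x \<in> A \<Longrightarrow> f x \<in> B" by auto

lemma compl_shift:
  fixes c cb :: "nat \<Rightarrow> nat"
  assumes smc: "strict_mono_on {0..<Suc q} c" and cn: "\<forall>t<Suc q. c t < Suc n'"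
    and smb: "strict_mono_on {0..<p} cb" and img: "cb ` {0..<p} = {0..<Suc n'} - c ` {0..<Suc q}"
  shows "strict_mono_on {0..<p} (\<lambda>j. if cb j < c q then cb j else cb j - 1)"
    and "(\<lambda>j. if cb j < c q then cb j else cb j - 1) ` {0..<p} = {0..<n'} - c ` {0..<q}"
proof -
  have ct: "c t < c q" if "t < q" for t using smc that by (auto simp: strict_mono_on_def)
  have cbne: "cb j \<noteq> c q" if "j < p" for j
  proof -
    have "cb j \<in> cb ` {0..<p}" using that by auto
    then have "cb j \<notin> c ` {0..<Suc q}" using img by auto
    moreover have "c q \<in> c ` {0..<Suc q}" by auto
    ultimately show ?thesis by metis
  qed
  have cbc: "cb j \<noteq> c t" if "j < p" "t < Suc q" for j t
    using img_mem[OF img, of j] that by auto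
  have cbn: "cb j < Suc n'" if "j < p" for j using img_mem[OF img, of j] that by auto
  show "strict_mono_on {0..<p} (\<lambda>j. if cb j < c q then cb j else cb j - 1)"
    unfolding strict_mono_on_def
  proof (intro allI impI)
    fix i j assume "i \<in> {0..<p} \<and> j \<in> {0..<p} \<and> i < j"
    then have i: "i \<in> {0..<p}" and j: "j \<in> {0..<p}" and ij: "i < j" by auto
    have "cb i < cb j" using smb i j ij by (auto simp: strict_mono_on_def)
    then show "(if cb i < c q then cb i else cb i - 1) < (if cb j < c q then cb j else cb j - 1)"
      using cbne[of i] cbne[of j] i j by auto
  qed
  show "(\<lambda>j. if cb j < c q then cb j else cb j - 1) ` {0..<p} = {0..<n'} - c ` {0..<q}"
  proof (intro equalityI subsetI)
    fix x assume "x \<in> (\<lambda>j. if cb j < c q then cb j else cb j - 1) ` {0..<p}"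
    then obtain j where j: "j < p" and x: "x = (if cb j < c q then cb j else cb j - 1)" by auto
    have cq: "c q < Suc n'" using cn by auto
    show "x \<in> {0..<n'} - c ` {0..<q}"
    proof (cases "cb j < c q")
      case True
      then show ?thesis using x cq cbc[OF j] by (auto simp: image_iff)
    next
      case False
      then have g: "cb j > c q" using cbne[OF j] by auto
      have "x < n'" using x cbn[OF j] g False by auto
      moreover have "x \<notin> c ` {0..<q}"
      proof (rule notin_imgI)
        fix t assume "t \<in> {0..<q}"
        then have "c t < c q" using ct by auto
        then show "x \<noteq> c t" using x False g by auto
      qed
      ultimately show ?thesis by simp
    qed
  next
    fix x assume x: "x \<in> {0..<n'} - c ` {0..<q}"
    define y where "y = (if x < c q then x else Suc x)"
    have "y \<in> {0..<Suc n'} - c ` {0..<Suc q}"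
    proof -
      have "y < Suc n'" using x by (auto simp: y_def)
      moreover have "y \<notin> c ` {0..<Suc q}"
      proof (rule notin_imgI)
        fix t assume "t \<in> {0..<Suc q}"
        then have that: "t < Suc q" by simp
        show "y \<noteq> c t"
      proof (cases "t = q")
        case True then show ?thesis by (auto simp: y_def)
      next
        case False
        then have "t < q" using that by auto
        then show ?thesis using x ct[of t] by (auto simp: y_def)
      qed
      qed
      ultimately show ?thesis by simp
    qed
    then have "y \<in> cb ` {0..<p}" using img by simp
    then obtain j where j0: "j \<in> {0..<p}" and yj: "y = cb j" by (rule imageE) auto
    have j: "j < p" using j0 by simp
    have "x = (if cb j < c q then cb j else cb j - 1)" using yj by (auto simp: y_def split: if_splits)
    then show "x \<in> (\<lambda>j. if cb j < c q then cb j else cb j - 1) ` {0..<p}" using j by auto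
  qed
qed

lemma unitcols:
  fixes Z :: "int mat"
  assumes "Z \<in> carrier_mat n n" "q \<le> n"
    "strict_mono_on {0..<q} c" "strict_mono_on {0..<q} \<rho>"
    "\<forall>t<q. c t < n \<and> \<rho> t < n"
    "\<forall>t<q. \<forall>i<n. Z $$ (i, c t) = (if i = \<rho> t then 1 else 0)"
    "strict_mono_on {0..<n-q} cb" "strict_mono_on {0..<n-q} \<rho>b"
    "cb ` {0..<n-q} = {0..<n} - c ` {0..<q}" "\<rho>b ` {0..<n-q} = {0..<n} - \<rho> ` {0..<q}"
  shows "det Z = (-1)^(\<Sum>t<q. c t + \<rho> t) * det (mat (n-q) (n-q) (\<lambda>(i,j). Z $$ (\<rho>b i, cb j)))"
  using assms
proof (induction q arbitrary: n Z cb \<rho>b)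
  case 0
  have cbi: "cb i = i" if "i < n" for i
    using enum_unique[of n cb id i] 0 that by (auto simp: strict_mono_on_def)
  have rbi: "\<rho>b i = i" if "i < n" for i
    using enum_unique[of n \<rho>b id i] 0 that by (auto simp: strict_mono_on_def)
  have "mat n n (\<lambda>(i,j). Z $$ (\<rho>b i, cb j)) = Z"
    by (rule eq_matI) (use 0 cbi rbi in auto)
  then show ?case by simp
next
  case (Suc q)
  obtain n' where n: "n = Suc n'" using Suc.prems(2) by (cases n) auto
  define cq where "cq = c q"
  define rq where "rq = \<rho> q"
  have cqn: "cq < n" and rqn: "rq < n" using Suc.prems(5) by (auto simp: cq_def rq_def)
  have ct: "c t < cq" if "t < q" for t using Suc.prems(3) that by (auto simp: strict_mono_on_def cq_def)
  have rt: "\<rho> t < rq" if "t < q" for t using Suc.prems(4) that by (auto simp: strict_mono_on_def rq_def)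
  have "det Z = (\<Sum>i<n. Z $$ (i, cq) * cofactor Z i cq)"
    by (rule laplace_expansion_column[OF Suc.prems(1) cqn])
  also have "\<dots> = (\<Sum>i<n. if i = rq then cofactor Z i cq else 0)"
    by (rule sum.cong) (use Suc.prems(6) in \<open>auto simp: cq_def rq_def\<close>)
  also have "\<dots> = cofactor Z rq cq" using rqn by simp
  finally have dZ: "det Z = (-1)^(rq + cq) * det (mat_delete Z rq cq)" by (simp add: cofactor_def)
  define Z' where "Z' = mat_delete Z rq cq"
  have Z'c: "Z' \<in> carrier_mat n' n'" using Suc.prems(1) n by (auto simp: Z'_def mat_delete_def)
  have Z'e: "Z' $$ (i, j) = Z $$ (if i < rq then i else Suc i, if j < cq then j else Suc j)"
    if "i < n'" "j < n'" for i j
    using that Suc.prems(1) n by (auto simp: Z'_def mat_delete_def)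
  define cb' where "cb' = (\<lambda>j. if cb j < c q then cb j else cb j - 1)"
  define rb' where "rb' = (\<lambda>j. if \<rho>b j < \<rho> q then \<rho>b j else \<rho>b j - 1)"
  have nq: "n - Suc q = n' - q" using n by simp
  have cs: "strict_mono_on {0..<n'-q} cb'" "cb' ` {0..<n'-q} = {0..<n'} - c ` {0..<q}"
    using compl_shift[of q c n' "n'-q" cb] Suc.prems n nq unfolding cb'_def by auto
  have rs: "strict_mono_on {0..<n'-q} rb'" "rb' ` {0..<n'-q} = {0..<n'} - \<rho> ` {0..<q}"
    using compl_shift[of q \<rho> n' "n'-q" \<rho>b] Suc.prems n nq unfolding rb'_def by auto
  have IH: "det Z' = (-1)^(\<Sum>t<q. c t + \<rho> t) * det (mat (n'-q) (n'-q) (\<lambda>(i,j). Z' $$ (rb' i, cb' j)))"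
  proof (rule Suc.IH[OF Z'c])
    show "q \<le> n'" using Suc.prems(2) n by simp
    show "strict_mono_on {0..<q} c" using Suc.prems(3) by (auto simp: strict_mono_on_def)
    show "strict_mono_on {0..<q} \<rho>" using Suc.prems(4) by (auto simp: strict_mono_on_def)
    show "\<forall>t<q. c t < n' \<and> \<rho> t < n'" using ct rt cqn rqn n by fastforce
    show "\<forall>t<q. \<forall>i<n'. Z' $$ (i, c t) = (if i = \<rho> t then 1 else 0)"
    proof (intro allI impI)
      fix t i assume t: "t < q" and i: "i < n'"
      have ctn: "c t < n'" using ct[OF t] cqn n by auto
      have "Z' $$ (i, c t) = Z $$ (if i < rq then i else Suc i, c t)"
        using Z'e[OF i ctn] ct[OF t] by simp
      also have "\<dots> = (if (if i < rq then i else Suc i) = \<rho> t then 1 else 0)"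
        using Suc.prems(6) t i n by auto
      also have "\<dots> = (if i = \<rho> t then 1 else 0)" using rt[OF t] by auto
      finally show "Z' $$ (i, c t) = (if i = \<rho> t then 1 else 0)" .
    qed
  qed (use cs rs in auto)
  have cbne: "cb j \<noteq> cq" if "j < n - Suc q" for j
  proof -
    have "cb j \<in> cb ` {0..<n - Suc q}" using that by auto
    then have "cb j \<notin> c ` {0..<Suc q}" using Suc.prems(9) by auto
    moreover have "c q \<in> c ` {0..<Suc q}" by auto
    ultimately show ?thesis unfolding cq_def by metis
  qed
  have rbne: "\<rho>b j \<noteq> rq" if "j < n - Suc q" for j
  proof -
    have "\<rho>b j \<in> \<rho>b ` {0..<n - Suc q}" using that by auto
    then have "\<rho>b j \<notin> \<rho> ` {0..<Suc q}" using Suc.prems(10) by auto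
    moreover have "\<rho> q \<in> \<rho> ` {0..<Suc q}" by auto
    ultimately show ?thesis unfolding rq_def by metis
  qed
  have cbn: "cb j < n" if "j < n - Suc q" for j using img_mem[OF Suc.prems(9), of j] that by auto
  have rbn: "\<rho>b j < n" if "j < n - Suc q" for j using img_mem[OF Suc.prems(10), of j] that by auto
  have meq: "mat (n'-q) (n'-q) (\<lambda>(i,j). Z' $$ (rb' i, cb' j)) = mat (n - Suc q) (n - Suc q) (\<lambda>(i,j). Z $$ (\<rho>b i, cb j))"
  proof (rule eq_matI)
    fix i j assume i: "i < dim_row (mat (n - Suc q) (n - Suc q) (\<lambda>(i,j). Z $$ (\<rho>b i, cb j)))"
      and j: "j < dim_col (mat (n - Suc q) (n - Suc q) (\<lambda>(i,j). Z $$ (\<rho>b i, cb j)))"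
    have i': "i < n - Suc q" and j': "j < n - Suc q" using i j by auto
    have r1: "rb' i < n'" using img_mem[OF rs(2), of i] i' nq by auto
    have c1: "cb' j < n'" using img_mem[OF cs(2), of j] j' nq by auto
    have "Z' $$ (rb' i, cb' j) = Z $$ (\<rho>b i, cb j)"
      using Z'e[OF r1 c1] cbne[OF j'] rbne[OF i'] unfolding rb'_def cb'_def cq_def rq_def by auto
    then show "mat (n'-q) (n'-q) (\<lambda>(i,j). Z' $$ (rb' i, cb' j)) $$ (i, j) = mat (n - Suc q) (n - Suc q) (\<lambda>(i,j). Z $$ (\<rho>b i, cb j)) $$ (i, j)"
      using i' j' nq by simp
  qed (use nq in auto)
  have se: "(\<Sum>t<Suc q. c t + \<rho> t) = (\<Sum>t<q. c t + \<rho> t) + (rq + cq)"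
    by (simp add: cq_def rq_def)
  have "det Z = (-1)^(rq + cq) * ((-1)^(\<Sum>t<q. c t + \<rho> t) * det (mat (n - Suc q) (n - Suc q) (\<lambda>(i,j). Z $$ (\<rho>b i, cb j))))"
    using dZ IH meq unfolding Z'_def by simp
  then show ?case unfolding se power_add by (simp only: mult_ac)
qed



lemma jacobi:
  fixes M N :: "int mat" and r s rb sb :: "nat \<Rightarrow> nat"
  assumes M: "M \<in> carrier_mat L L" and N: "N \<in> carrier_mat L L" and MN: "M * N = 1\<^sub>m L"
    and L: "L = k + m"
    and smr: "strict_mono_on {0..<k} r" and sms: "strict_mono_on {0..<k} s"
    and rlt: "\<forall>i<k. r i < L" and slt: "\<forall>i<k. s i < L"
    and smrb: "strict_mono_on {0..<m} rb" and smsb: "strict_mono_on {0..<m} sb"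
    and rbimg: "rb ` {0..<m} = {0..<L} - r ` {0..<k}"
    and sbimg: "sb ` {0..<m} = {0..<L} - s ` {0..<k}"
  shows "det (mat k k (\<lambda>(i,j). M $$ (r i, s j))) =
    (-1)^(\<Sum>t<m. sb t + rb t) * det M * det (mat m m (\<lambda>(i,j). N $$ (sb i, rb j)))"
proof -
  define idx where "idx j = (THE t. t < m \<and> sb t = j)" for j
  have injsb: "inj_on sb {0..<m}" using smsb strict_mono_on_imp_inj_on by blast
  have idx: "idx (sb t) = t" if "t < m" for t
    unfolding idx_def
    by (rule the_equality) (use that injsb in \<open>auto simp: inj_on_def\<close>)
  have sbL: "sb t < L" and sbs: "sb t \<notin> s ` {0..<k}" if "t < m" for t
    using img_mem[OF sbimg, of t] that by auto
  have rbL: "rb t < L" and rbr: "rb t \<notin> r ` {0..<k}" if "t < m" for t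
    using img_mem[OF rbimg, of t] that by auto
  have rimg: "r ` {0..<k} = {0..<L} - rb ` {0..<m}" using rbimg rlt by auto
  have simg: "s ` {0..<k} = {0..<L} - sb ` {0..<m}" using sbimg slt by auto
  define Y where "Y = mat L L (\<lambda>(i,j). if j \<in> s ` {0..<k} then (if i = j then 1 else 0)
                                      else N $$ (i, rb (idx j)))"
  have Y: "Y \<in> carrier_mat L L" by (simp add: Y_def)
  define Z where "Z = M * Y"
  have Z: "Z \<in> carrier_mat L L" using M Y by (simp add: Z_def)
  have dZ: "det Z = det M * det Y" unfolding Z_def by (rule det_mult[OF M Y])
  have Zs: "Z $$ (i, s t) = M $$ (i, s t)" if "i < L" "t < k" for i t
  proof -
    have "Z $$ (i, s t) = (\<Sum>u\<in>{0..<L}. M $$ (i, u) * Y $$ (u, s t))"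
      using M Y that slt by (simp add: Z_def scalar_prod_def)
    also have "\<dots> = (\<Sum>u\<in>{0..<L}. if u = s t then M $$ (i, s t) else 0)"
      by (rule sum.cong) (use that slt in \<open>auto simp: Y_def\<close>)
    also have "\<dots> = M $$ (i, s t)" using that slt by simp
    finally show ?thesis .
  qed
  have Zsb: "Z $$ (i, sb t) = (if i = rb t then 1 else 0)" if "i < L" "t < m" for i t
  proof -
    have "Z $$ (i, sb t) = (\<Sum>u\<in>{0..<L}. M $$ (i, u) * Y $$ (u, sb t))"
      using M Y that sbL by (simp add: Z_def scalar_prod_def)
    also have "\<dots> = (\<Sum>u\<in>{0..<L}. M $$ (i, u) * N $$ (u, rb t))"
      by (rule sum.cong) (use that sbL sbs idx in \<open>auto simp: Y_def\<close>)
    also have "\<dots> = (M * N) $$ (i, rb t)"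
      using M N that rbL by (simp add: scalar_prod_def)
    also have "\<dots> = (if i = rb t then 1 else 0)" using MN that rbL by simp
    finally show ?thesis .
  qed
  have uZ: "det Z = (-1)^(\<Sum>t<m. sb t + rb t) * det (mat (L-m) (L-m) (\<lambda>(i,j). Z $$ (r i, s j)))"
    by (rule unitcols[OF Z]) (use L smsb smrb sbL rbL Zsb smr sms rimg simg in auto)
  have mZ: "mat (L-m) (L-m) (\<lambda>(i,j). Z $$ (r i, s j)) = mat k k (\<lambda>(i,j). M $$ (r i, s j))"
    by (rule eq_matI) (use L Zs rlt in auto)
  have uY: "det Y = (-1)^(\<Sum>t<k. s t + s t) * det (mat (L-k) (L-k) (\<lambda>(i,j). Y $$ (sb i, sb j)))"
  proof (rule unitcols[OF Y])
    show "\<forall>t<k. \<forall>i<L. Y $$ (i, s t) = (if i = s t then 1 else 0)"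
      using slt by (auto simp: Y_def)
  qed (use L sms slt smsb sbimg in auto)
  have mY: "mat (L-k) (L-k) (\<lambda>(i,j). Y $$ (sb i, sb j)) = mat m m (\<lambda>(i,j). N $$ (sb i, rb j))"
    by (rule eq_matI) (use L sbL sbs idx in \<open>auto simp: Y_def\<close>)
  have sg: "(-1::int)^(\<Sum>t<k. s t + s t) = 1"
  proof -
    have "(\<Sum>t<k. s t + s t) = 2 * (\<Sum>t<k. s t)" by (simp add: sum.distrib)
    then show ?thesis by (simp add: power_mult)
  qed
  define \<sigma> where "\<sigma> = (\<Sum>t<m. sb t + rb t)"
  have e: "det M * det (mat m m (\<lambda>(i,j). N $$ (sb i, rb j))) = (-1)^\<sigma> * det (mat k k (\<lambda>(i,j). M $$ (r i, s j)))"
    using dZ uZ mZ uY mY sg unfolding \<sigma>_def by simp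
  have "det (mat k k (\<lambda>(i,j). M $$ (r i, s j))) = ((-1)^\<sigma> * (-1)^\<sigma>) * det (mat k k (\<lambda>(i,j). M $$ (r i, s j)))"
    by (simp add: power_add[symmetric])
  also have "\<dots> = (-1)^\<sigma> * (det M * det (mat m m (\<lambda>(i,j). N $$ (sb i, rb j))))"
    using e by (simp add: mult.assoc)
  finally show ?thesis unfolding \<sigma>_def by (simp add: mult.assoc)
qed



definition Adj :: "nat \<Rightarrow> fm" where
  "Adj D = (\<lambda>i j. if i < D \<and> j < D \<and> (i = Suc j \<or> j = Suc i) then 1 else 0)"

lemma supp_Adj[simp]: "supp D (Adj D)" by (auto simp: supp_def Adj_def)

lemma symm_Adj: "symm (Adj D)" by (auto simp: symm_def Adj_def)

lemma strip_paths_0: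
  "strip_paths K 0 r s = (if r = s \<and> 0 \<le> r \<and> r \<le> K then {[r]} else {})"
  by (auto simp: strip_paths_def length_Suc_conv)

lemma strip_paths_finite: "finite (strip_paths K N r s)"
proof -
  have "strip_paths K N r s \<subseteq> {xs. set xs \<subseteq> {0..K} \<and> length xs = Suc N}"
    by (auto simp: strip_paths_def in_set_conv_nth less_Suc_eq_le)
  moreover have "finite {xs. set xs \<subseteq> {0..K} \<and> length xs = Suc N}"
    by (rule finite_lists_length_eq) simp
  ultimately show ?thesis by (rule finite_subset)
qed

lemma strip_paths_Suc:
  assumes "0 \<le> s" "s \<le> K"
  shows "strip_paths K (Suc N) r s =
    (\<lambda>xs. xs @ [s]) ` (\<Union>t\<in>{t. 0 \<le> t \<and> t \<le> K \<and> \<bar>s - t\<bar> = 1}. strip_paths K N r t)"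
proof (intro equalityI subsetI)
  fix xs assume xs: "xs \<in> strip_paths K (Suc N) r s"
  have len: "length xs = Suc (Suc N)" using xs by (simp add: strip_paths_def)
  define ys where "ys = take (Suc N) xs"
  have xsys: "xs = ys @ [s]"
  proof -
    have "xs = take (Suc (Suc N)) xs" using len by (metis take_all order_refl)
    also have "\<dots> = ys @ [xs ! Suc N]" unfolding ys_def using len by (metis lessI take_Suc_conv_app_nth)
    finally show ?thesis using xs by (simp add: strip_paths_def)
  qed
  have ysn: "ys ! i = xs ! i" if "i < Suc N" for i using that by (simp add: ys_def)
  have P: "xs ! 0 = r" "xs ! Suc N = s" "\<And>i. i < Suc N \<Longrightarrow> \<bar>xs ! Suc i - xs ! i\<bar> = 1"
    "\<And>i. i \<le> Suc N \<Longrightarrow> 0 \<le> xs ! i \<and> xs ! i \<le> K"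
    using xs unfolding strip_paths_def by auto
  have "ys \<in> strip_paths K N r (xs ! N)"
    unfolding strip_paths_def
  proof (intro CollectI conjI allI impI)
    show "length ys = Suc N" using len by (simp add: ys_def)
    show "ys ! 0 = r" using ysn[of 0] P by simp
    show "ys ! N = xs ! N" using ysn[of N] by simp
    fix i
    show "i < N \<Longrightarrow> \<bar>ys ! Suc i - ys ! i\<bar> = 1" using ysn[of i] ysn[of "Suc i"] P(3)[of i] by simp
    show "i \<le> N \<Longrightarrow> 0 \<le> ys ! i" using ysn[of i] P(4)[of i] by simp
    show "i \<le> N \<Longrightarrow> ys ! i \<le> K" using ysn[of i] P(4)[of i] by simp
  qed
  moreover have "0 \<le> xs ! N \<and> xs ! N \<le> K \<and> \<bar>s - xs ! N\<bar> = 1"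
    using P(2) P(3)[of N] P(4)[of N] by simp
  ultimately show "xs \<in> (\<lambda>xs. xs @ [s]) ` (\<Union>t\<in>{t. 0 \<le> t \<and> t \<le> K \<and> \<bar>s - t\<bar> = 1}. strip_paths K N r t)"
    using xsys by blast
next
  fix xs assume "xs \<in> (\<lambda>xs. xs @ [s]) ` (\<Union>t\<in>{t. 0 \<le> t \<and> t \<le> K \<and> \<bar>s - t\<bar> = 1}. strip_paths K N r t)"
  then obtain ys t where xs: "xs = ys @ [s]" and t: "0 \<le> t" "t \<le> K" "\<bar>s - t\<bar> = 1"
    and ys: "ys \<in> strip_paths K N r t" by blast
  have len: "length ys = Suc N" using ys by (simp add: strip_paths_def)
  have e1: "xs ! i = ys ! i" if "i < Suc N" for i using that len by (simp add: xs nth_append)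
  have e2: "xs ! Suc N = s" using len by (simp add: xs nth_append)
  show "xs \<in> strip_paths K (Suc N) r s"
    unfolding strip_paths_def
  proof (intro CollectI conjI allI impI)
    show "length xs = Suc (Suc N)" using len xs by simp
    show "xs ! 0 = r" using e1[of 0] ys by (simp add: strip_paths_def)
    show "xs ! Suc N = s" by (rule e2)
    fix i
    show "i < Suc N \<Longrightarrow> \<bar>xs ! Suc i - xs ! i\<bar> = 1"
    proof -
      assume i: "i < Suc N"
      show ?thesis
      proof (cases "i = N")
        case True
        then show ?thesis using e1[of N] e2 ys t by (simp add: strip_paths_def abs_minus_commute)
      next
        case False
        then show ?thesis using e1[of i] e1[of "Suc i"] i ys by (simp add: strip_paths_def)
      qed
    qed
    show "i \<le> Suc N \<Longrightarrow> 0 \<le> xs ! i" "i \<le> Suc N \<Longrightarrow> xs ! i \<le> K"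
    proof -
      assume i: "i \<le> Suc N"
      have "0 \<le> xs ! i \<and> xs ! i \<le> K"
      proof (cases "i = Suc N")
        case True then show ?thesis using e2 assms by simp
      next
        case False
        then show ?thesis using e1[of i] i ys by (simp add: strip_paths_def)
      qed
      then show "0 \<le> xs ! i" "xs ! i \<le> K" by auto
    qed
  qed
qed

lemma card_strip_Suc:
  assumes "0 \<le> s" "s \<le> K"
  shows "card (strip_paths K (Suc N) r s) = (\<Sum>t\<in>{t. 0 \<le> t \<and> t \<le> K \<and> \<bar>s - t\<bar> = 1}. card (strip_paths K N r t))"
proof -
  let ?I = "{t. 0 \<le> t \<and> t \<le> K \<and> \<bar>s - t\<bar> = 1}"
  have fI: "finite ?I" by (rule finite_subset[of _ "{0..K}"]) auto
  have "card (strip_paths K (Suc N) r s) = card (\<Union>t\<in>?I. strip_paths K N r t)"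
    unfolding strip_paths_Suc[OF assms]
    by (rule card_image) (auto simp: inj_on_def)
  also have "\<dots> = (\<Sum>t\<in>?I. card (strip_paths K N r t))"
  proof (rule card_UN_disjoint[OF fI])
    show "\<forall>i\<in>?I. finite (strip_paths K N r i)" by (simp add: strip_paths_finite)
    show "\<forall>i\<in>?I. \<forall>j\<in>?I. i \<noteq> j \<longrightarrow> strip_paths K N r i \<inter> strip_paths K N r j = {}"
      by (auto simp: strip_paths_def)
  qed
  finally show ?thesis .
qed

lemma paths_mp:
  assumes "r < D" "s < D"
  shows "C_nonneg (int D - 1) N (int r) (int s) = mp D (Adj D) N r s"
  using assms(2)
proof (induction N arbitrary: s)
  case 0
  then show ?case using assms(1) by (auto simp: C_nonneg_def strip_paths_0 idm_def)
next
  case (Suc N)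
  let ?K = "int D - 1"
  define J where "J = {u \<in> {..<D}. u = Suc s \<or> s = Suc u}"
  have IJ: "{t. 0 \<le> t \<and> t \<le> ?K \<and> \<bar>int s - t\<bar> = 1} = int ` J"
  proof (intro equalityI subsetI)
    fix x assume x: "x \<in> {t. 0 \<le> t \<and> t \<le> ?K \<and> \<bar>int s - t\<bar> = 1}"
    then have "x = int (nat x)" and "nat x \<in> J" by (auto simp: J_def)
    then show "x \<in> int ` J" by blast
  next
    fix x assume "x \<in> int ` J"
    then show "x \<in> {t. 0 \<le> t \<and> t \<le> ?K \<and> \<bar>int s - t\<bar> = 1}" by (auto simp: J_def)
  qed
  have cs: "card (strip_paths ?K (Suc N) (int r) (int s)) = (\<Sum>t\<in>{t. 0 \<le> t \<and> t \<le> ?K \<and> \<bar>int s - t\<bar> = 1}. card (strip_paths ?K N (int r) t))"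
    by (rule card_strip_Suc) (use Suc.prems in auto)
  have "C_nonneg ?K (Suc N) (int r) (int s) = (\<Sum>t\<in>int ` J. C_nonneg ?K N (int r) t)"
    unfolding C_nonneg_def cs IJ by (simp add: of_nat_sum)
  also have "\<dots> = (\<Sum>u\<in>J. C_nonneg ?K N (int r) (int u))"
    by (rule sum.reindex_cong[of int]) (auto simp: inj_on_def)
  also have "\<dots> = (\<Sum>u\<in>J. mp D (Adj D) N r u)"
    by (rule sum.cong) (auto simp: J_def Suc.IH)
  also have "\<dots> = (\<Sum>u<D. if u = Suc s \<or> s = Suc u then mp D (Adj D) N r u else 0)"
    unfolding J_def by (rule sum.inter_filter) simp
  also have "\<dots> = (\<Sum>u<D. mp D (Adj D) N r u * Adj D u s)"
    by (rule sum.cong) (use Suc.prems in \<open>auto simp: Adj_def\<close>)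
  also have "\<dots> = mp D (Adj D) (Suc N) r s"
    using assms(1) Suc.prems by (simp add: mm_def)
  finally show ?case .
qed



fun cf :: "nat \<Rightarrow> nat \<Rightarrow> int" where
  "cf 0 i = (if i = 0 then 1 else 0)"
| "cf (Suc 0) i = (if i = 1 then 1 else 0)"
| "cf (Suc (Suc j)) i = (if i = 0 then 0 else cf (Suc j) (i - 1)) - cf j i"

lemma cf_gt: "j < i \<Longrightarrow> cf j i = 0"
  by (induction j i rule: cf.induct) auto

lemma cf_diag: "cf j j = 1"
proof (induction j rule: nat_less_induct)
  case (1 j)
  then show ?case
  proof (cases j)
    case (Suc j')
    then show ?thesis using 1 by (cases j') (auto simp: cf_gt)
  qed simp
qed

lemma cf_0: "cf j 0 = (if even j then (-1)^(j div 2) else 0)"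
proof (induction j rule: nat_less_induct)
  case (1 j)
  then show ?case
  proof (cases j)
    case (Suc j')
    then show ?thesis using 1 by (cases j') auto
  qed simp
qed

lemma cf_par: "cf j i \<noteq> 0 \<Longrightarrow> even (i + j)"
proof (induction j i rule: cf.induct)
  case (3 j i)
  have "(i \<noteq> 0 \<and> cf (Suc j) (i - 1) \<noteq> 0) \<or> cf j i \<noteq> 0"
    using 3(3) by (auto split: if_splits)
  then show ?case
  proof
    assume a: "i \<noteq> 0 \<and> cf (Suc j) (i - 1) \<noteq> 0"
    then have "even (i - 1 + Suc j)" using 3(1) by auto
    then show ?thesis using a by (cases i) auto
  next
    assume "cf j i \<noteq> 0"
    then have "even (i + j)" using 3(2) by auto
    then show ?thesis by simp
  qed
qed (auto split: if_splits)

fun Qm :: "nat \<Rightarrow> nat \<Rightarrow> fm" where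
  "Qm D 0 = idm D"
| "Qm D (Suc 0) = Adj D"
| "Qm D (Suc (Suc j)) = (\<lambda>x y. mm D (Adj D) (Qm D (Suc j)) x y - Qm D j x y)"

lemma supp_diff: "supp n X \<Longrightarrow> supp n Y \<Longrightarrow> supp n (\<lambda>x y. X x y - Y x y)"
  unfolding supp_def by (metis diff_self)

lemma supp_Qm[simp]: "supp D (Qm D j)"
  by (induction D j rule: Qm.induct) (auto intro: supp_diff)

lemma Qm_col0: "Suc 0 < D \<Longrightarrow> j < D \<Longrightarrow> Qm D j x 0 = (if x = j then 1 else 0)"
proof (induction D j arbitrary: x rule: Qm.induct)
  case (1 D)
  then show ?case by (auto simp: idm_def)
next
  case (2 D)
  then show ?case by (auto simp: Adj_def)
next
  case (3 D j)
  have "mm D (Adj D) (Qm D (Suc j)) x 0 = (if x < D then (\<Sum>t<D. Adj D x t * (if t = Suc j then 1 else 0)) else 0)"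
    using 3 by (simp add: mm_def)
  also have "\<dots> = (if x < D then Adj D x (Suc j) else 0)"
    using 3(4) by (simp add: if_distrib cong: if_cong)
  finally have e: "mm D (Adj D) (Qm D (Suc j)) x 0 = (if x < D then Adj D x (Suc j) else 0)" .
  show ?case using 3 unfolding Qm.simps e by (auto simp: Adj_def)
qed

lemma Qm_D_col0: assumes "D = Suc (Suc j)" shows "Qm D D x 0 = 0"
proof -
  have "mm D (Adj D) (Qm D (Suc j)) x 0 = (if x < D then (\<Sum>t<D. Adj D x t * (if t = Suc j then 1 else 0)) else 0)"
    using assms Qm_col0[of D "Suc j"] by (simp add: mm_def)
  also have "\<dots> = (if x < D then Adj D x (Suc j) else 0)"
    using assms by (simp add: if_distrib cong: if_cong)
  finally have e: "mm D (Adj D) (Qm D (Suc j)) x 0 = (if x < D then Adj D x (Suc j) else 0)" .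
  have q: "Qm D D x 0 = mm D (Adj D) (Qm D (Suc j)) x 0 - Qm D j x 0" using assms by simp
  show ?thesis using assms Qm_col0[of D j x] unfolding q e by (auto simp: Adj_def)
qed

lemma mm_A_Qm: "mm D (Adj D) (Qm D j) = mm D (Qm D j) (Adj D)"
proof (induction D j rule: Qm.induct)
  case (1 D)
  then show ?case by (simp add: mm_idm_left mm_idm_right)
next
  case (2 D)
  then show ?case by simp
next
  case (3 D j)
  have h1: "mm D (Adj D) (mm D (Adj D) (Qm D (Suc j))) = mm D (mm D (Adj D) (Qm D (Suc j))) (Adj D)"
  proof -
    have "mm D (Adj D) (mm D (Adj D) (Qm D (Suc j))) = mm D (Adj D) (mm D (Qm D (Suc j)) (Adj D))"
      using 3(1) by simp
    also have "\<dots> = mm D (mm D (Adj D) (Qm D (Suc j))) (Adj D)" by (simp only: mm_assoc)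
    finally show ?thesis .
  qed
  have h2: "mm D (Adj D) (Qm D j) = mm D (Qm D j) (Adj D)" using 3(2) .
  show ?case by (simp only: Qm.simps mm_diff_right mm_diff_left h1 h2)
qed

lemma Qm_comm:
  shows "mm D X (Adj D) = mm D (Adj D) X \<Longrightarrow> supp D X \<Longrightarrow> mm D X (Qm D j) = mm D (Qm D j) X"
proof (induction D j rule: Qm.induct)
  case (1 D)
  then show ?case by (simp add: mm_idm_left mm_idm_right)
next
  case (2 D)
  then show ?case by simp
next
  case (3 D j)
  have h1: "mm D X (mm D (Adj D) (Qm D (Suc j))) = mm D (mm D (Adj D) (Qm D (Suc j))) X"
  proof -
    have "mm D X (mm D (Adj D) (Qm D (Suc j))) = mm D (mm D X (Adj D)) (Qm D (Suc j))" by (simp add: mm_assoc)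
    also have "\<dots> = mm D (Adj D) (mm D X (Qm D (Suc j)))" using 3 by (simp add: mm_assoc)
    also have "\<dots> = mm D (Adj D) (mm D (Qm D (Suc j)) X)" using 3 by simp
    finally show ?thesis by (simp add: mm_assoc)
  qed
  have h2: "mm D X (Qm D j) = mm D (Qm D j) X" using 3 by simp
  show ?case by (simp only: Qm.simps mm_diff_right mm_diff_left h1 h2)
qed



lemma Qm_D_zero: assumes "D = Suc (Suc j0)" shows "Qm D D x y = 0"
proof (cases "x < D \<and> y < D")
  case False
  then show ?thesis using suppD[OF supp_Qm[of D D]] by blast
next
  case True
  have "Qm D D x y = (\<Sum>t<D. if t = y then Qm D D x t else 0)"
    using True by simp
  also have "\<dots> = (\<Sum>t<D. Qm D D x t * Qm D y t 0)"
    by (rule sum.cong) (use True assms Qm_col0[of D y] in auto)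
  also have "\<dots> = mm D (Qm D D) (Qm D y) x 0" using True by (simp add: mm_def)
  also have "\<dots> = mm D (Qm D y) (Qm D D) x 0"
    using Qm_comm[of D "Qm D D" y] mm_A_Qm[of D D] by simp
  also have "\<dots> = (\<Sum>t<D. Qm D y x t * Qm D D t 0)" using True by (simp add: mm_def)
  also have "\<dots> = 0" using Qm_D_col0[OF assms] by simp
  finally show ?thesis .
qed

lemma mm_sum_right: "mm n X (\<lambda>x y. \<Sum>i\<in>I. c i * Y i x y) a b = (\<Sum>i\<in>I. c i * mm n X (Y i) a b)"
  by (auto simp: mm_def sum_distrib_left mult_ac intro: sum.swap)

lemma mm_sum_left: "mm n (\<lambda>x y. \<Sum>i\<in>I. c i * Y i x y) X a b = (\<Sum>i\<in>I. c i * mm n (Y i) X a b)"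
  by (auto simp: mm_def sum_distrib_left sum_distrib_right mult_ac intro: sum.swap)

lemma Qm_poly: "Qm D j x y = (\<Sum>i\<le>j. cf j i * mp D (Adj D) i x y)"
proof (induction D j arbitrary: x y rule: Qm.induct)
  case (1 D)
  then show ?case by simp
next
  case (2 D)
  then show ?case by (simp add: mm_idm_left)
next
  case (3 D j)
  have IH1: "Qm D (Suc j) = (\<lambda>x y. \<Sum>i\<le>Suc j. cf (Suc j) i * mp D (Adj D) i x y)"
    using 3(1) by (intro ext) simp
  have "mm D (Adj D) (Qm D (Suc j)) x y = (\<Sum>i\<le>Suc j. cf (Suc j) i * mm D (Adj D) (mp D (Adj D) i) x y)"
    unfolding IH1 by (rule mm_sum_right)
  also have "\<dots> = (\<Sum>i\<le>Suc j. cf (Suc j) i * mp D (Adj D) (Suc i) x y)"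
    by (simp only: mp_Suc')
  finally have a: "mm D (Adj D) (Qm D (Suc j)) x y = (\<Sum>i\<le>Suc j. cf (Suc j) i * mp D (Adj D) (Suc i) x y)" .
  have b: "(\<Sum>i\<le>Suc (Suc j). (if i = 0 then 0 else cf (Suc j) (i - 1)) * mp D (Adj D) i x y)
      = (\<Sum>i\<le>Suc j. cf (Suc j) i * mp D (Adj D) (Suc i) x y)"
    by (subst sum.atMost_Suc_shift) simp
  have c: "(\<Sum>i\<le>Suc (Suc j). cf j i * mp D (Adj D) i x y) = (\<Sum>i\<le>j. cf j i * mp D (Adj D) i x y)"
    by (simp add: cf_gt)
  have "(\<Sum>i\<le>Suc (Suc j). cf (Suc (Suc j)) i * mp D (Adj D) i x y)
      = (\<Sum>i\<le>Suc (Suc j). (if i = 0 then 0 else cf (Suc j) (i - 1)) * mp D (Adj D) i x y)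
        - (\<Sum>i\<le>Suc (Suc j). cf j i * mp D (Adj D) i x y)"
    by (simp add: algebra_simps sum_subtractf)
  also have "\<dots> = mm D (Adj D) (Qm D (Suc j)) x y - Qm D j x y"
    unfolding a b c 3(2) ..
  finally show ?case by simp
qed

lemma rec_A:
  assumes "D = 2 * L" "1 \<le> L"
  shows "(\<Sum>i\<le>D. cf D i * mp D (Adj D) i x y) = 0"
proof -
  have "D = Suc (Suc (D - 2))" using assms by simp
  then show ?thesis using Qm_D_zero[of D "D - 2" x y] Qm_poly[of D D x y] by simp
qed

lemma cf_D0:
  assumes "D = 2 * L" shows "cf D 0 = (-1)^L" and "cf D 0 * cf D 0 = 1"
proof -
  show a: "cf D 0 = (-1)^L" using assms by (simp add: cf_0)
  show "cf D 0 * cf D 0 = 1" unfolding a by (simp add: power_add[symmetric])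
qed

definition Winv :: "nat \<Rightarrow> fm" where
  "Winv D = (\<lambda>x y. \<Sum>i<D. (- cf D 0 * cf D (Suc i)) * mp D (Adj D) i x y)"

lemma supp_Winv[simp]: "supp D (Winv D)"
  unfolding supp_def Winv_def
proof (intro allI impI)
  fix i j assume "(\<Sum>ia<D. - cf D 0 * cf D (Suc ia) * mp D (Adj D) ia i j) \<noteq> 0"
  then obtain t where "mp D (Adj D) t i j \<noteq> 0" by (metis (no_types, lifting) mult_zero_right sum.neutral)
  then show "i < D \<and> j < D" using suppD[OF supp_mp[of D "Adj D" t]] by blast
qed

lemma AW_aux:
  assumes "D = 2 * L" "1 \<le> L"
  shows "(\<Sum>i<D. (- cf D 0 * cf D (Suc i)) * mp D (Adj D) (Suc i) x y) = idm D x y"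
proof -
  have "(\<Sum>i\<le>D. cf D i * mp D (Adj D) i x y) = cf D 0 * idm D x y + (\<Sum>i<D. cf D (Suc i) * mp D (Adj D) (Suc i) x y)"
    by (subst sum.atMost_shift) simp
  then have e: "(\<Sum>i<D. cf D (Suc i) * mp D (Adj D) (Suc i) x y) = - cf D 0 * idm D x y"
    using rec_A[OF assms] by simp
  have "(\<Sum>i<D. (- cf D 0 * cf D (Suc i)) * mp D (Adj D) (Suc i) x y) = - cf D 0 * (\<Sum>i<D. cf D (Suc i) * mp D (Adj D) (Suc i) x y)"
    by (simp add: sum_distrib_left mult.assoc)
  also have "\<dots> = (cf D 0 * cf D 0) * idm D x y" unfolding e by simp
  also have "\<dots> = idm D x y" using cf_D0[OF assms(1)] by simp
  finally show ?thesis .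
qed

lemma AW:
  assumes "D = 2 * L" "1 \<le> L"
  shows "mm D (Adj D) (Winv D) = idm D" "mm D (Winv D) (Adj D) = idm D"
proof -
  show "mm D (Adj D) (Winv D) = idm D"
  proof (intro ext)
    fix x y
    have "mm D (Adj D) (Winv D) x y = (\<Sum>i<D. (- cf D 0 * cf D (Suc i)) * mm D (Adj D) (mp D (Adj D) i) x y)"
      unfolding Winv_def by (rule mm_sum_right)
    also have "\<dots> = (\<Sum>i<D. (- cf D 0 * cf D (Suc i)) * mp D (Adj D) (Suc i) x y)"
      by (simp only: mp_Suc')
    finally show "mm D (Adj D) (Winv D) x y = idm D x y" using AW_aux[OF assms] by simp
  qed
  show "mm D (Winv D) (Adj D) = idm D"
  proof (intro ext)
    fix x y
    have "mm D (Winv D) (Adj D) x y = (\<Sum>i<D. (- cf D 0 * cf D (Suc i)) * mm D (mp D (Adj D) i) (Adj D) x y)"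
      unfolding Winv_def by (rule mm_sum_left)
    also have "\<dots> = (\<Sum>i<D. (- cf D 0 * cf D (Suc i)) * mp D (Adj D) (Suc i) x y)"
      by simp
    finally show "mm D (Winv D) (Adj D) x y = idm D x y" using AW_aux[OF assms] by simp
  qed
qed



definition Eop :: "(nat \<Rightarrow> int) \<Rightarrow> nat \<Rightarrow> (int \<Rightarrow> int) \<Rightarrow> int \<Rightarrow> int" where
  "Eop a d g = (\<lambda>N. \<Sum>i\<le>d. a i * g (N + int i))"

lemma vanish:
  assumes a0: "a 0 \<noteq> 0" and E: "\<And>N. Eop a d g N = 0" and pos: "\<And>M. M \<ge> 0 \<Longrightarrow> g M = 0"
  shows "g N = 0"
proof -
  have "\<forall>N. N \<ge> - int j \<longrightarrow> g N = 0" for j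
  proof (induction j)
    case 0 then show ?case using pos by simp
  next
    case (Suc j)
    show ?case
    proof (intro allI impI)
      fix N assume N: "N \<ge> - int (Suc j)"
      show "g N = 0"
      proof (cases "N \<ge> - int j")
        case True then show ?thesis using Suc by blast
      next
        case False
        have z: "g (N + int (Suc i)) = 0" for i using Suc False N by auto
        have "0 = Eop a d g N" using E by simp
        also have "\<dots> = a 0 * g N + (\<Sum>i<d. a (Suc i) * g (N + int (Suc i)))"
          unfolding Eop_def by (subst sum.atMost_shift) simp
        also have "\<dots> = a 0 * g N" using z by simp
        finally show ?thesis using a0 by simp
      qed
    qed
  qed
  then show ?thesis by (metis le_refl nat_0_le nat_le_0 neg_0_le_iff_le nat_int int_nat_eq minus_minus neg_le_iff_le nle_le)
qed

lemma Eop_comm: "Eop a d (Eop b e g) = Eop b e (Eop a d g)"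
proof (intro ext)
  fix N
  have "Eop a d (Eop b e g) N = (\<Sum>i\<le>d. \<Sum>j\<le>e. a i * b j * g (N + int i + int j))"
    unfolding Eop_def by (simp add: sum_distrib_left mult.assoc add.assoc)
  also have "\<dots> = (\<Sum>j\<le>e. \<Sum>i\<le>d. a i * b j * g (N + int i + int j))" by (rule sum.swap)
  also have "\<dots> = Eop b e (Eop a d g) N"
    unfolding Eop_def by (simp add: sum_distrib_left mult_ac add_ac)
  finally show "Eop a d (Eop b e g) N = Eop b e (Eop a d g) N" .
qed

lemma Eop_diff: "Eop a d (\<lambda>N. f N - g N) = (\<lambda>N. Eop a d f N - Eop a d g N)"
  unfolding Eop_def by (intro ext) (simp add: algebra_simps sum_subtractf)

lemma rec_unique:
  assumes "satisfies_lin_rec c1" "satisfies_lin_rec c2" "\<And>M. M \<ge> 0 \<Longrightarrow> c1 M = c2 M"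
  shows "c1 = c2"
proof -
  obtain d a where a0: "a 0 \<noteq> 0" and Ea: "\<And>N. Eop a d c1 N = 0"
    using assms(1) unfolding satisfies_lin_rec_def Eop_def by blast
  obtain e b where b0: "b 0 \<noteq> 0" and Eb: "\<And>N. Eop b e c2 N = 0"
    using assms(2) unfolding satisfies_lin_rec_def Eop_def by blast
  define D where "D = (\<lambda>N. c1 N - c2 N)"
  define h where "h = Eop b e D"
  have Eah: "Eop a d h N = 0" for N
  proof -
    have "Eop a d h = Eop b e (Eop a d D)" unfolding h_def by (rule Eop_comm)
    also have "Eop a d D = (\<lambda>N. Eop a d c1 N - Eop a d c2 N)" unfolding D_def by (rule Eop_diff)
    also have "\<dots> = (\<lambda>N. - Eop a d c2 N)" using Ea by simp
    finally have "Eop a d h = Eop b e (\<lambda>N. - Eop a d c2 N)" .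
    also have "\<dots> = (\<lambda>N. - Eop b e (Eop a d c2) N)"
      unfolding Eop_def by (intro ext) (simp add: sum_negf)
    also have "Eop b e (Eop a d c2) = Eop a d (Eop b e c2)" by (rule Eop_comm)
    also have "\<dots> = (\<lambda>N. 0)" unfolding Eop_def using Eb by (simp add: Eop_def)
    finally show ?thesis by simp
  qed
  have Dpos: "D M = 0" if "M \<ge> 0" for M using assms(3) that by (simp add: D_def)
  have hpos: "h M = 0" if "M \<ge> 0" for M
    unfolding h_def Eop_def using Dpos that by simp
  have h0: "h N = 0" for N by (rule vanish[OF a0 Eah hpos])
  have D0: "D N = 0" for N
  proof (rule vanish[of b e D])
    show "b 0 \<noteq> 0" by (rule b0)
    show "Eop b e D N' = 0" for N' using h0 by (simp add: h_def)
    show "D M = 0" if "M \<ge> 0" for M using Dpos that .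
  qed
  show ?thesis using D0 by (auto simp: D_def)
qed

definition Apow :: "nat \<Rightarrow> int \<Rightarrow> fm" where
  "Apow D N = (if 0 \<le> N then mp D (Adj D) (nat N) else mp D (Winv D) (nat (-N)))"

lemma WA_pow:
  assumes "mm D (Winv D) (Adj D) = idm D"
  shows "mm D (mp D (Winv D) p) (mp D (Adj D) i) = (if i \<le> p then mp D (Winv D) (p - i) else mp D (Adj D) (i - p))"
proof (induction i arbitrary: p)
  case 0
  then show ?case by (simp add: mm_idm_right)
next
  case (Suc i)
  show ?case
  proof (cases p)
    case 0
    then show ?thesis by (simp add: mm_idm_left)
  next
    case (Suc p')
    have "mm D (mp D (Winv D) p) (mp D (Adj D) (Suc i))
        = mm D (mm D (mp D (Winv D) p') (Winv D)) (mm D (Adj D) (mp D (Adj D) i))"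
      by (simp only: Suc mp.simps(2)[of D "Winv D" p'] mp_Suc'[of D "Adj D" i])
    also have "\<dots> = mm D (mp D (Winv D) p') (mm D (mm D (Winv D) (Adj D)) (mp D (Adj D) i))"
      by (simp only: mm_assoc)
    also have "\<dots> = mm D (mp D (Winv D) p') (mp D (Adj D) i)"
      unfolding assms by (simp add: mm_idm_left)
    also have "\<dots> = (if i \<le> p' then mp D (Winv D) (p' - i) else mp D (Adj D) (i - p'))" by (rule Suc.IH)
    finally show ?thesis using Suc by simp
  qed
qed

lemma Apow_add:
  assumes "mm D (Winv D) (Adj D) = idm D"
  shows "Apow D (N + int i) = mm D (Apow D N) (mp D (Adj D) i)"
proof (cases "0 \<le> N")
  case True
  then have "nat (N + int i) = nat N + i" by simp
  then show ?thesis using True by (simp add: Apow_def mp_add)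
next
  case False
  define p where "p = nat (-N)"
  have N: "N = - int p" using False by (simp add: p_def)
  have r: "mm D (Apow D N) (mp D (Adj D) i) = (if i \<le> p then mp D (Winv D) (p - i) else mp D (Adj D) (i - p))"
    using False WA_pow[OF assms] by (simp add: Apow_def p_def)
  show ?thesis
  proof (cases "i \<le> p")
    case True
    then show ?thesis using r N by (auto simp: Apow_def nat_diff_distrib')
  next
    case False
    then have "nat (int i - int p) = i - p" by simp
    then show ?thesis using r N False by (auto simp: Apow_def)
  qed
qed

lemma lin_rec_Apow:
  assumes "D = 2 * L" "1 \<le> L"
  shows "satisfies_lin_rec (\<lambda>N. Apow D N r s)"
  unfolding satisfies_lin_rec_def
proof (intro exI conjI allI)
  show "cf D 0 \<noteq> 0" using cf_D0[OF assms(1)] by auto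
  show "cf D D \<noteq> 0" by (simp add: cf_diag)
  fix N :: int
  have "(\<Sum>i\<le>D. cf D i * Apow D (N + int i) r s) = (\<Sum>i\<le>D. cf D i * mm D (Apow D N) (mp D (Adj D) i) r s)"
    using Apow_add[OF AW(2)[OF assms]] by simp
  also have "\<dots> = mm D (Apow D N) (\<lambda>x y. \<Sum>i\<le>D. cf D i * mp D (Adj D) i x y) r s"
    by (rule mm_sum_right[symmetric])
  also have "(\<lambda>x y. \<Sum>i\<le>D. cf D i * mp D (Adj D) i x y) = (\<lambda>x y. 0)"
    using rec_A[OF assms] by simp
  finally show "(\<Sum>i\<le>D. cf D i * Apow D (N + int i) r s) = 0" by (simp add: mm_def)
qed

lemma C_eq:
  assumes "D = 2 * L" "1 \<le> L" "r < D" "s < D"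
  shows "C (int D - 1) N (int r) (int s) = Apow D N r s"
proof -
  let ?P = "\<lambda>c. (\<forall>M\<ge>0. c M = C_nonneg (int D - 1) (nat M) (int r) (int s)) \<and> satisfies_lin_rec c"
  have P0: "?P (\<lambda>N. Apow D N r s)"
    using lin_rec_Apow[OF assms(1,2)] paths_mp[OF assms(3,4)] by (simp add: Apow_def)
  have "(THE c. ?P c) = (\<lambda>N. Apow D N r s)"
  proof (rule the_equality[where P = ?P])
    show "?P (\<lambda>N. Apow D N r s)" by (rule P0)
    fix c assume Pc: "?P c"
    show "c = (\<lambda>N. Apow D N r s)"
      by (rule rec_unique) (use Pc P0 in auto)
  qed
  then show ?thesis using paths_mp[OF assms(3,4)] by (simp add: C_def Apow_def)
qed



definition par :: "nat \<Rightarrow> fm \<Rightarrow> bool" where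
  "par p X \<longleftrightarrow> (\<forall>i j. X i j \<noteq> 0 \<longrightarrow> even (i + j + p))"

lemma par_mm: assumes "par p X" "par q Y" shows "par (p + q) (mm n X Y)"
  unfolding par_def
proof (intro allI impI)
  fix i j assume "mm n X Y i j \<noteq> 0"
  then have "(\<Sum>t<n. X i t * Y t j) \<noteq> 0" by (auto simp: mm_def split: if_splits)
  then obtain t where "X i t * Y t j \<noteq> 0" by (metis (no_types, lifting) sum.neutral)
  then have "even (i + t + p)" "even (t + j + q)" using assms by (auto simp: par_def)
  then show "even (i + j + (p + q))" by presburger
qed

lemma par_idm: "par 0 (idm n)" by (auto simp: par_def idm_def)

lemma par_mp: "par p X \<Longrightarrow> par (p * k) (mp n X k)"
proof (induction k)
  case 0 then show ?case by (simp add: par_idm)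
next
  case (Suc k)
  then have "par (p * k + p) (mm n (mp n X k) X)" by (intro par_mm) auto
  then show ?case by (simp add: add.commute)
qed

lemma par_even: "par (2 * k) X \<Longrightarrow> par 0 X"
  unfolding par_def by auto

lemma par_Adj: "par 1 (Adj D)" by (auto simp: par_def Adj_def)

lemma par_Winv: assumes "D = 2 * L" shows "par 1 (Winv D)"
  unfolding par_def
proof (intro allI impI)
  fix x y assume "Winv D x y \<noteq> 0"
  then obtain i where "- cf D 0 * cf D (Suc i) * mp D (Adj D) i x y \<noteq> 0"
    unfolding Winv_def by (metis (no_types, lifting) sum.neutral)
  then have a: "cf D (Suc i) \<noteq> 0" and b: "mp D (Adj D) i x y \<noteq> 0" by auto
  have "even (Suc i + D)" using cf_par[OF a] .
  moreover have "even (x + y + 1 * i)" using par_mp[OF par_Adj, of i D] b by (auto simp: par_def)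
  ultimately show "even (x + y + 1)" using assms by presburger
qed

lemma sum_even_odd: "(\<Sum>t<2 * (p::nat). f t) = (\<Sum>c<p. f (2 * c) + f (2 * c + 1))"
  by (induction p) (auto simp: add_ac)

lemma mm_even:
  assumes "par 0 X" "par 0 Y" "D = 2 * L"
  shows "mm L (\<lambda>a b. X (2 * a) (2 * b)) (\<lambda>a b. Y (2 * a) (2 * b)) a b = mm D X Y (2 * a) (2 * b)"
proof -
  have "(\<Sum>t<D. X (2 * a) t * Y t (2 * b)) = (\<Sum>c<L. X (2 * a) (2 * c) * Y (2 * c) (2 * b))"
  proof -
    have "(\<Sum>t<D. X (2 * a) t * Y t (2 * b)) =
       (\<Sum>c<L. X (2 * a) (2 * c) * Y (2 * c) (2 * b) + X (2 * a) (2 * c + 1) * Y (2 * c + 1) (2 * b))"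
      unfolding assms(3) by (rule sum_even_odd)
    also have "\<dots> = (\<Sum>c<L. X (2 * a) (2 * c) * Y (2 * c) (2 * b))"
    proof (rule sum.cong)
      fix c
      have "X (2 * a) (2 * c + 1) = 0"
      proof (rule ccontr)
        assume "X (2 * a) (2 * c + 1) \<noteq> 0"
        then have "even (2 * a + (2 * c + 1) + 0)" using assms(1) unfolding par_def by blast
        then show False by simp
      qed
      then show "X (2 * a) (2 * c) * Y (2 * c) (2 * b) + X (2 * a) (2 * c + 1) * Y (2 * c + 1) (2 * b) =
          X (2 * a) (2 * c) * Y (2 * c) (2 * b)" by simp
    qed simp
    finally show ?thesis .
  qed
  then show ?thesis using assms(3) by (simp add: mm_def)
qed

lemma mp_even:
  assumes "par 0 X" "D = 2 * L"
  shows "mp L (\<lambda>a b. X (2 * a) (2 * b)) k a b = mp D X k (2 * a) (2 * b)"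
proof (induction k arbitrary: a b)
  case 0
  then show ?case using assms(2) by (simp add: idm_def)
next
  case (Suc k)
  have e: "mp L (\<lambda>a b. X (2 * a) (2 * b)) k = (\<lambda>a b. mp D X k (2 * a) (2 * b))"
    using Suc by (intro ext) simp
  have p: "par 0 (mp D X k)" using par_mp[OF assms(1), of k D] by simp
  show ?case unfolding mp.simps e by (rule mm_even[OF p assms])
qed

lemma inv_pow:
  assumes "mm D X Y = idm D" "supp D X" "supp D Y"
  shows "mm D (mp D X k) (mp D Y k) = idm D"
proof (induction k)
  case 0 then show ?case by (simp add: mm_idm_left)
next
  case (Suc k)
  have "mm D (mp D X (Suc k)) (mp D Y (Suc k)) = mm D (mm D (mp D X k) X) (mm D Y (mp D Y k))"
    by (simp only: mp.simps(2)[of D X k] mp_Suc'[of D Y k])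
  also have "\<dots> = mm D (mp D X k) (mm D (mm D X Y) (mp D Y k))" by (simp only: mm_assoc)
  also have "\<dots> = mm D (mp D X k) (mp D Y k)" unfolding assms(1) by (simp add: mm_idm_left)
  finally show ?case using Suc by simp
qed

lemma mat_mult_fm:
  "mat L L (\<lambda>(a, b). F a b) * mat L L (\<lambda>(a, b). G a b) = mat L L (\<lambda>(a, b). \<Sum>c<L. F a c * G c b)"
  by (rule eq_matI) (auto simp: scalar_prod_def lessThan_atLeast0)



lemma symm_Winv: "symm (Winv D)"
  unfolding symm_def Winv_def
  using symm_mp[OF symm_Adj] by (simp add: symm_def)

lemma par0_pow: assumes "par 1 X" shows "par 0 (mp D X (2 * n))"
proof -
  have "par (1 * (2 * n)) (mp D X (2 * n))" by (rule par_mp[OF assms])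
  then show ?thesis by (intro par_even[of n]) simp
qed

lemma MN_block:
  assumes "D = 2 * L" "1 \<le> L"
  shows "mat L L (\<lambda>(a, b). mp D (Adj D) (2 * n) (2 * a) (2 * b)) * mat L L (\<lambda>(a, b). mp D (Winv D) (2 * n) (2 * a) (2 * b)) = 1\<^sub>m L"
proof -
  have pA: "par 0 (mp D (Adj D) (2 * n))" by (rule par0_pow[OF par_Adj])
  have pW: "par 0 (mp D (Winv D) (2 * n))" by (rule par0_pow[OF par_Winv[OF assms(1)]])
  have inv: "mm D (mp D (Adj D) (2 * n)) (mp D (Winv D) (2 * n)) = idm D"
    by (rule inv_pow) (use AW[OF assms] in auto)
  show ?thesis
    unfolding mat_mult_fm
  proof (rule eq_matI)
    fix a b assume a: "a < dim_row (1\<^sub>m L)" and b: "b < dim_col (1\<^sub>m L)"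
    have "(\<Sum>c<L. mp D (Adj D) (2 * n) (2 * a) (2 * c) * mp D (Winv D) (2 * n) (2 * c) (2 * b))
        = mm L (\<lambda>a b. mp D (Adj D) (2 * n) (2 * a) (2 * b)) (\<lambda>a b. mp D (Winv D) (2 * n) (2 * a) (2 * b)) a b"
      using a b by (simp add: mm_def)
    also have "\<dots> = mm D (mp D (Adj D) (2 * n)) (mp D (Winv D) (2 * n)) (2 * a) (2 * b)"
      by (rule mm_even[OF pA pW assms(1)])
    also have "\<dots> = 1\<^sub>m L $$ (a, b)" unfolding inv using a b assms(1) by (simp add: idm_def)
    finally show "mat L L (\<lambda>(a, b). \<Sum>c<L. mp D (Adj D) (2 * n) (2 * a) (2 * c) * mp D (Winv D) (2 * n) (2 * c) (2 * b)) $$ (a, b) = 1\<^sub>m L $$ (a, b)"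
      using a b by simp
  qed auto
qed

lemma det_T:
  assumes "D = 2 * L" "1 \<le> L"
  shows "det (mat L L (\<lambda>(a, b). mp D (Adj D) 2 (2 * a) (2 * b))) = 1"
proof -
  define Bm where "Bm = mat L L (\<lambda>(a, c). Adj D (2 * a) (2 * c + 1))"
  have Bc: "Bm \<in> carrier_mat L L" by (simp add: Bm_def)
  have T: "mat L L (\<lambda>(a, b). mp D (Adj D) 2 (2 * a) (2 * b)) = Bm * transpose_mat Bm"
  proof (rule eq_matI)
    fix a b assume a: "a < dim_row (Bm * transpose_mat Bm)" and b: "b < dim_col (Bm * transpose_mat Bm)"
    have aL: "a < L" and bL: "b < L" using a b by (auto simp: Bm_def)
    have m2: "mp D (Adj D) 2 = mm D (Adj D) (Adj D)"
      by (simp add: numeral_2_eq_2 mm_idm_left)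
    have "mp D (Adj D) 2 (2 * a) (2 * b) = (\<Sum>t<D. Adj D (2 * a) t * Adj D t (2 * b))"
      unfolding m2 using aL bL assms(1) by (simp add: mm_def)
    also have "\<dots> = (\<Sum>c<L. Adj D (2 * a) (2 * c) * Adj D (2 * c) (2 * b) + Adj D (2 * a) (2 * c + 1) * Adj D (2 * c + 1) (2 * b))"
      unfolding assms(1) by (rule sum_even_odd)
    also have "\<dots> = (\<Sum>c<L. Adj D (2 * a) (2 * c + 1) * Adj D (2 * b) (2 * c + 1))"
    proof (rule sum.cong)
      fix c
      have "Adj D (2 * a) (2 * c) = 0" by (auto simp: Adj_def) presburger+
      moreover have "Adj D (2 * c + 1) (2 * b) = Adj D (2 * b) (2 * c + 1)" using symm_Adj by (simp add: symm_def)
      ultimately show "Adj D (2 * a) (2 * c) * Adj D (2 * c) (2 * b) + Adj D (2 * a) (2 * c + 1) * Adj D (2 * c + 1) (2 * b) =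
         Adj D (2 * a) (2 * c + 1) * Adj D (2 * b) (2 * c + 1)" by simp
    qed simp
    also have "\<dots> = (Bm * transpose_mat Bm) $$ (a, b)"
      using aL bL by (simp add: Bm_def scalar_prod_def lessThan_atLeast0)
    finally show "mat L L (\<lambda>(a, b). mp D (Adj D) 2 (2 * a) (2 * b)) $$ (a, b) = (Bm * transpose_mat Bm) $$ (a, b)"
      using aL bL by simp
  qed (auto simp: Bm_def)
  have dT: "det (mat L L (\<lambda>(a, b). mp D (Adj D) 2 (2 * a) (2 * b))) = det Bm * det Bm"
  proof -
    have Btc: "transpose_mat Bm \<in> carrier_mat L L" using Bc by simp
    show ?thesis unfolding T det_mult[OF Bc Btc] det_transpose[OF Bc] ..
  qed
  have "det (mat L L (\<lambda>(a, b). mp D (Adj D) (2 * 1) (2 * a) (2 * b))) * det (mat L L (\<lambda>(a, b). mp D (Winv D) (2 * 1) (2 * a) (2 * b))) = 1"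
    using det_mult[of "mat L L (\<lambda>(a, b). mp D (Adj D) (2 * 1) (2 * a) (2 * b))" L "mat L L (\<lambda>(a, b). mp D (Winv D) (2 * 1) (2 * a) (2 * b))"]
      MN_block[OF assms, of 1] by simp
  then have "(det Bm * det Bm) * det (mat L L (\<lambda>(a, b). mp D (Winv D) 2 (2 * a) (2 * b))) = 1"
    using dT by simp
  then have "det Bm * det Bm = 1 \<or> det Bm * det Bm = -1" using pos_zmult_eq_1_iff_lemma by blast
  then have "det Bm * det Bm = 1"
    by (metis add.inverse_inverse mult_minus_left mult_minus_right neg_0_le_iff_le not_one_le_zero zero_le_square)
  then show ?thesis using dT by simp
qed

lemma det_M:
  assumes "D = 2 * L" "1 \<le> L"
  shows "det (mat L L (\<lambda>(a, b). mp D (Adj D) (2 * n) (2 * a) (2 * b))) = 1"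
proof -
  define T where "T = (\<lambda>a b. mp D (Adj D) 2 (2 * a) (2 * b))"
  have pA: "par 0 (mp D (Adj D) 2)" using par0_pow[OF par_Adj[of D], of D 1] by simp
  have e: "mp D (Adj D) (2 * n) (2 * a) (2 * b) = mp L T n a b" for a b
    unfolding T_def mp_mult mp_even[OF pA assms(1)] ..
  have "det (mat L L (\<lambda>(a, b). mp L T n a b)) = 1"
  proof (induction n)
    case 0
    have "mat L L (\<lambda>(a, b). mp L T 0 a b) = 1\<^sub>m L" by (rule eq_matI) (auto simp: idm_def)
    then show ?case by simp
  next
    case (Suc n)
    have "mat L L (\<lambda>(a, b). mp L T (Suc n) a b) = mat L L (\<lambda>(a, b). mp L T n a b) * mat L L (\<lambda>(a, b). T a b)"
      unfolding mat_mult_fm by (rule eq_matI) (auto simp: mm_def)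
    moreover have "det (mat L L (\<lambda>(a, b). T a b)) = 1" using det_T[OF assms] by (simp add: T_def)
    ultimately show ?case using Suc det_mult[of "mat L L (\<lambda>(a, b). mp L T n a b)" L "mat L L (\<lambda>(a, b). T a b)"] by simp
  qed
  then show ?thesis unfolding e .
qed



lemma sub_mem: "f ` A \<subseteq> B \<Longrightarrow> x \<in> A \<Longrightarrow> f x \<in> B" by auto

lemma shift_facts:
  fixes r :: "nat \<Rightarrow> int"
  assumes "strict_mono_on {0..<k} r" "r ` {0..<k} \<subseteq> {1..int L}"
  shows "strict_mono_on {0..<k} (\<lambda>i. nat (r i) - 1)" "\<forall>i<k. nat (r i) - 1 < L"
    "\<And>i. i < k \<Longrightarrow> 2 * r i - 2 = int (2 * (nat (r i) - 1))"
    "\<And>i. i < k \<Longrightarrow> r i = int (nat (r i) - 1) + 1"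
proof -
  have b: "1 \<le> r i \<and> r i \<le> int L" if "i < k" for i
  proof -
    have "r i \<in> r ` {0..<k}" using that by simp
    then show ?thesis using assms(2) by auto
  qed
  show "strict_mono_on {0..<k} (\<lambda>i. nat (r i) - 1)"
    unfolding strict_mono_on_def
  proof (intro allI impI)
    fix i j assume "i \<in> {0..<k} \<and> j \<in> {0..<k} \<and> i < j"
    then have "r i < r j" "i < k" "j < k" using assms(1) by (auto simp: strict_mono_on_def)
    then show "nat (r i) - 1 < nat (r j) - 1" using b[of i] b[of j] by linarith
  qed
  show "\<forall>i<k. nat (r i) - 1 < L"
  proof (intro allI impI)
    fix i assume "i < k"
    then have "1 \<le> r i \<and> r i \<le> int L" by (rule b)
    then show "nat (r i) - 1 < L" by linarith
  qed
  have e: "int (nat (r i) - 1) = r i - 1" if "i < k" for i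
    using b[OF that] by (subst of_nat_diff) auto
  show "2 * r i - 2 = int (2 * (nat (r i) - 1))" if "i < k" for i using e[OF that] by simp
  show "r i = int (nat (r i) - 1) + 1" if "i < k" for i using e[OF that] by simp
qed

lemma img_shift:
  fixes r rb :: "nat \<Rightarrow> int"
  assumes img: "rb ` {0..<m} = {1..int L} - r ` {0..<k}" and sub: "r ` {0..<k} \<subseteq> {1..int L}"
  shows "(\<lambda>i. nat (rb i) - 1) ` {0..<m} = {0..<L} - (\<lambda>i. nat (r i) - 1) ` {0..<k}"
proof (intro equalityI subsetI)
  fix x assume "x \<in> (\<lambda>i. nat (rb i) - 1) ` {0..<m}"
  then obtain i where i: "i < m" and x: "x = nat (rb i) - 1" by auto
  have rbi: "rb i \<in> {1..int L} - r ` {0..<k}" using img_mem[OF img, of i] i by simp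
  have "x < L" using rbi x by auto
  moreover have "x \<notin> (\<lambda>i. nat (r i) - 1) ` {0..<k}"
  proof (rule notin_imgI)
    fix j assume j: "j \<in> {0..<k}"
    have "r j \<in> {1..int L}" by (rule sub_mem[OF sub j])
    moreover have "rb i \<noteq> r j" using rbi j by auto
    ultimately show "x \<noteq> nat (r j) - 1" using x rbi by auto
  qed
  ultimately show "x \<in> {0..<L} - (\<lambda>i. nat (r i) - 1) ` {0..<k}" by simp
next
  fix x assume x: "x \<in> {0..<L} - (\<lambda>i. nat (r i) - 1) ` {0..<k}"
  define y where "y = int x + 1"
  have "y \<notin> r ` {0..<k}"
  proof (rule notin_imgI)
    fix j assume j: "j \<in> {0..<k}"
    have "r j \<in> {1..int L}" by (rule sub_mem[OF sub j])
    moreover have "x \<noteq> nat (r j) - 1" using x j by auto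
    ultimately show "y \<noteq> r j" unfolding y_def by auto
  qed
  then have "y \<in> rb ` {0..<m}" unfolding img using x by (auto simp: y_def)
  then obtain i where i: "i \<in> {0..<m}" and yi: "y = rb i" by (rule imageE) auto
  have "x = nat (rb i) - 1" using yi by (simp add: y_def)
  then show "x \<in> (\<lambda>i. nat (rb i) - 1) ` {0..<m}" using i by auto
qed

theorem theorem21:
  fixes n k m :: nat and r s rb sb :: "nat \<Rightarrow> int"
  assumes "k \<ge> 1" and "m \<ge> 1"
    and "strict_mono_on {0..<k} r" and "strict_mono_on {0..<k} s"
    and "r ` {0..<k} \<subseteq> {1..int (k + m)}" and "s ` {0..<k} \<subseteq> {1..int (k + m)}"
    and "strict_mono_on {0..<m} rb" and "strict_mono_on {0..<m} sb"
    and "rb ` {0..<m} = {1..int (k + m)} - r ` {0..<k}"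
    and "sb ` {0..<m} = {1..int (k + m)} - s ` {0..<k}"
  shows "det (mat k k (\<lambda>(i, j). C (2 * int k + 2 * int m - 1) (2 * int n) (2 * r i - 2) (2 * s j - 2)))
       = (-1) ^ nat (\<Sum>i<m. rb i + sb i) *
         det (mat m m (\<lambda>(i, j). C (2 * int k + 2 * int m - 1) (- 2 * int n) (2 * rb i - 2) (2 * sb j - 2)))"
proof -
  define L where "L = k + m"
  define D where "D = 2 * L"
  have L1: "1 \<le> L" using assms(1) by (simp add: L_def)
  have K: "2 * int k + 2 * int m - 1 = int D - 1" by (simp add: D_def L_def)
  have rbsub: "rb ` {0..<m} \<subseteq> {1..int L}" using assms(9) by (auto simp: L_def)
  have sbsub: "sb ` {0..<m} \<subseteq> {1..int L}" using assms(10) by (auto simp: L_def)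
  define r0 where "r0 i = nat (r i) - 1" for i
  define s0 where "s0 i = nat (s i) - 1" for i
  define rb0 where "rb0 i = nat (rb i) - 1" for i
  define sb0 where "sb0 i = nat (sb i) - 1" for i
  note fr = shift_facts[OF assms(3) assms(5)[folded L_def], folded r0_def]
  note fs = shift_facts[OF assms(4) assms(6)[folded L_def], folded s0_def]
  note frb = shift_facts[OF assms(7) rbsub, folded rb0_def]
  note fsb = shift_facts[OF assms(8) sbsub, folded sb0_def]
  define Mf where "Mf a b = mp D (Adj D) (2 * n) (2 * a) (2 * b)" for a b
  define Nf where "Nf a b = mp D (Winv D) (2 * n) (2 * a) (2 * b)" for a b
  define M where "M = mat L L (\<lambda>(a, b). Mf a b)"
  define N where "N = mat L L (\<lambda>(a, b). Nf a b)"
  have Mc: "M \<in> carrier_mat L L" and Nc: "N \<in> carrier_mat L L" by (auto simp: M_def N_def)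
  have MN: "M * N = 1\<^sub>m L" unfolding M_def N_def Mf_def Nf_def by (rule MN_block[OF D_def L1])
  have dM: "det M = 1" unfolding M_def Mf_def by (rule det_M[OF D_def L1])
  have Cpos: "C (int D - 1) (2 * int n) (int (2 * a)) (int (2 * b)) = Mf a b" if "a < L" "b < L" for a b
  proof -
    have "C (int D - 1) (2 * int n) (int (2 * a)) (int (2 * b)) = Apow D (2 * int n) (2 * a) (2 * b)"
      by (rule C_eq[OF D_def L1]) (use that in \<open>auto simp: D_def\<close>)
    also have "\<dots> = Mf a b" by (simp add: Apow_def Mf_def nat_mult_distrib)
    finally show ?thesis .
  qed
  have Cneg: "C (int D - 1) (- 2 * int n) (int (2 * a)) (int (2 * b)) = Nf a b" if "a < L" "b < L" for a b
  proof -
    have "C (int D - 1) (- 2 * int n) (int (2 * a)) (int (2 * b)) = Apow D (- 2 * int n) (2 * a) (2 * b)"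
      by (rule C_eq[OF D_def L1]) (use that in \<open>auto simp: D_def\<close>)
    also have "\<dots> = Nf a b" by (cases "n = 0") (auto simp: Apow_def Nf_def nat_mult_distrib)
    finally show ?thesis .
  qed
  have lhs: "mat k k (\<lambda>(i, j). C (2 * int k + 2 * int m - 1) (2 * int n) (2 * r i - 2) (2 * s j - 2))
      = mat k k (\<lambda>(i, j). M $$ (r0 i, s0 j))"
    by (rule eq_matI) (use fr fs Cpos in \<open>auto simp: K M_def\<close>)
  have rhs: "mat m m (\<lambda>(i, j). C (2 * int k + 2 * int m - 1) (- 2 * int n) (2 * rb i - 2) (2 * sb j - 2))
      = mat m m (\<lambda>(i, j). N $$ (rb0 i, sb0 j))"
    by (rule eq_matI) (use frb fsb Cneg in \<open>auto simp: K N_def\<close>)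
  have J: "det (mat k k (\<lambda>(i, j). M $$ (r0 i, s0 j))) =
      (-1)^(\<Sum>t<m. sb0 t + rb0 t) * det M * det (mat m m (\<lambda>(i, j). N $$ (sb0 i, rb0 j)))"
  proof (rule jacobi[OF Mc Nc MN L_def])
    show "rb0 ` {0..<m} = {0..<L} - r0 ` {0..<k}"
      unfolding rb0_def r0_def by (rule img_shift[OF assms(9)[folded L_def] assms(5)[folded L_def]])
    show "sb0 ` {0..<m} = {0..<L} - s0 ` {0..<k}"
      unfolding sb0_def s0_def by (rule img_shift[OF assms(10)[folded L_def] assms(6)[folded L_def]])
  qed (use fr fs frb fsb in auto)
  have symN: "Nf a b = Nf b a" for a b
    using symm_mp[OF symm_Winv, of D D "2 * n"] unfolding Nf_def symm_def by simp
  have tr: "det (mat m m (\<lambda>(i, j). N $$ (sb0 i, rb0 j))) = det (mat m m (\<lambda>(i, j). N $$ (rb0 i, sb0 j)))"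
  proof -
    have c: "mat m m (\<lambda>(i, j). N $$ (sb0 i, rb0 j)) \<in> carrier_mat m m" by simp
    have "transpose_mat (mat m m (\<lambda>(i, j). N $$ (sb0 i, rb0 j))) = mat m m (\<lambda>(i, j). N $$ (rb0 i, sb0 j))"
      by (rule eq_matI) (use frb fsb symN in \<open>auto simp: N_def\<close>)
    then show ?thesis using det_transpose[OF c] by simp
  qed
  have sg: "nat (\<Sum>i<m. rb i + sb i) = (\<Sum>t<m. sb0 t + rb0 t) + 2 * m"
  proof -
    have "(\<Sum>i<m. rb i + sb i) = (\<Sum>i<m. int (sb0 i + rb0 i) + 2)"
      by (rule sum.cong) (use frb(4) fsb(4) in auto)
    also have "\<dots> = int ((\<Sum>t<m. sb0 t + rb0 t) + 2 * m)" by (simp add: sum.distrib of_nat_sum)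
    finally have "(\<Sum>i<m. rb i + sb i) = int ((\<Sum>t<m. sb0 t + rb0 t) + 2 * m)" .
    then show ?thesis by (simp only: nat_int)
  qed
  have sg2: "(-1::int) ^ nat (\<Sum>i<m. rb i + sb i) = (-1) ^ (\<Sum>t<m. sb0 t + rb0 t)"
    unfolding sg by (simp add: power_add power_mult)
  show ?thesis unfolding lhs rhs J dM tr sg2 by simp
qed

end
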